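(* For any positive integers $q$ and $\ell$ with $\ell>q$ and $\ell$ a multiple of $q$, there exists an instance of \textsc{Min-Lin-Eq$(q)$} on the complete bipartite graph $K_{\ell,\ell}$ (i.e. integers $c_{uv}\in\{0,\dots,q-1\}$ for each edge $uv$, oriented from one side to the other, with constraint $x_u-x_v\equiv c_{uv}\pmod q$) such that for every vertex labeling $x$ of $K_{\ell,\ell}$ with labels in $\{0,\dots,q-1\}$, the number of satisfied constraints is at least $\ell^2/q-\Theta(\ell^{3/2})$ and at most $\ell^2/q+\Theta(\ell^{3/2})$; that is, it lies within $C\ell^{3/2}$ of $\ell^2/q$ for a constant $C$ depending only on $q$.
   Context: \textsc{Min-Lin-Eq$(q)$} on a graph $H$: each edge $uv$ (with a fixed orientation $(u,v)$) carries an integer $c_{uv}\in\{0,\dots,q-1\}$ and the constraint $x_u-x_v\equiv c_{uv}\pmod q$ on assignments $x:V(H)\to\{0,\dots,q-1\}$. *)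

theory Defs
  imports "HOL-Number_Theory.Cong" Complex_Main
begin

text \<open>Left vertices are (Inl i), right vertices (Inr j), for i, j < l; we represent
  a labeling by two functions xL, xR :: nat => nat on {0..<l}.
  Every edge is oriented from the left vertex i to the right vertex j and carries
  the integer c i j in {0..<q}; its constraint is  xL i - xR j = c i j (mod q).\<close>

definition kll_instance :: "nat \<Rightarrow> nat \<Rightarrow> (nat \<Rightarrow> nat \<Rightarrow> nat) \<Rightarrow> bool" where
  "kll_instance q l c \<longleftrightarrow> (\<forall>i<l. \<forall>j<l. c i j < q)"

definition kll_labeling :: "nat \<Rightarrow> nat \<Rightarrow> (nat \<Rightarrow> nat) \<Rightarrow> bool" where
  "kll_labeling q l x \<longleftrightarrow> (\<forall>i<l. x i < q)"

definition kll_satisfied :: "nat \<Rightarrow> nat \<Rightarrow> (nat \<Rightarrow> nat \<Rightarrow> nat) \<Rightarrow> (nat \<Rightarrow> nat) \<Rightarrow> (nat \<Rightarrow> nat) \<Rightarrow> nat" where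
  "kll_satisfied q l c xL xR =
     card {(i, j). i < l \<and> j < l \<and> [int (xL i) - int (xR j) = int (c i j)] (mod int q)}"

end

theory Submission imports Defs "HOL-Library.FuncSet" "HOL-Library.FuncSet" begin

lemma exp_quad: fixes x :: real assumes "\<bar>x\<bar> \<le> 1/2" shows "exp x \<le> 1 + x + x^2"
proof -
  obtain t where t: "\<bar>t\<bar> \<le> \<bar>x\<bar>" "exp x = (\<Sum>m<2. (x ^ m) / fact m) + (exp t / fact 2) * x ^ 2"
    using Maclaurin_exp_le[of x 2] by blast
  have "exp t \<le> 2" using exp_bound_half[of t] t(1) assms by simp
  hence "(exp t / fact 2) * x ^ 2 \<le> x^2" using mult_right_mono[of "exp t" 2 "x^2"] by simp
  hence "(exp t / fact 2) * x ^ 2 \<le> x^2" by (simp add: divide_le_eq mult_right_mono)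
  moreover have "(\<Sum>m<2. (x ^ m) / fact m) = 1 + x" by (simp add: numeral_2_eq_2)
  ultimately show ?thesis using t(2) by simp
qed

lemma mgf:
  assumes "finite A" "\<forall>p\<in>A. g p < q"
  shows "(\<Sum>c\<in>PiE A (\<lambda>_. {..<q}). exp (s * real (card {p\<in>A. c p = g p})))
         = (exp s + real q - 1) ^ card A"
proof -
  have "(exp s + real q - 1) ^ card A = (\<Prod>p\<in>A. \<Sum>y\<in>{..<q}. (if y = g p then exp s else 1))"
  proof -
    have "(\<Sum>y\<in>{..<q}. (if y = g p then exp s else 1)) = exp s + real q - 1" if "p \<in> A" for p
    proof -
      have "(\<Sum>y\<in>{..<q}. (if y = g p then exp s else 1)) = (\<Sum>y\<in>{..<q}. (if y = g p then exp s - 1 else 0) + 1)"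
        by (intro sum.cong) auto
      also have "\<dots> = exp s - 1 + real q" using that assms(2) by (simp add: sum.distrib)
      finally show ?thesis by simp
    qed
    thus ?thesis by simp
  qed
  also have "\<dots> = (\<Sum>c\<in>PiE A (\<lambda>_. {..<q}). \<Prod>p\<in>A. (if c p = g p then exp s else 1))"
    by (rule prod_sum_PiE) (use assms in auto)
  also have "\<dots> = (\<Sum>c\<in>PiE A (\<lambda>_. {..<q}). exp (s * real (card {p\<in>A. c p = g p})))"
  proof (intro sum.cong refl)
    fix c
    have "(\<Prod>p\<in>A. (if c p = g p then exp s else 1)) = (\<Prod>p\<in>{p\<in>A. c p = g p}. exp s)"
      using assms(1) by (simp add: prod.inter_filter[symmetric])
    also have "\<dots> = exp s ^ card {p\<in>A. c p = g p}" by simp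
    also have "\<dots> = exp (s * real (card {p\<in>A. c p = g p}))"
      by (simp add: exp_of_nat_mult[symmetric] mult.commute)
    finally show "(\<Prod>p\<in>A. (if c p = g p then exp s else 1)) = exp (s * real (card {p\<in>A. c p = g p}))" .
  qed
  finally show ?thesis by simp
qed

lemma mgf_bound:
  assumes "\<bar>s\<bar> \<le> 1/2" "q > 0"
  shows "(exp s + real q - 1) ^ n \<le> real q ^ n * exp (real n * s / q + real n * s^2)"
proof -
  have "exp s + real q - 1 = real q * (1 + (exp s - 1) / q)" using assms by (simp add: field_simps)
  also have "\<dots> \<le> real q * exp ((exp s - 1) / q)"
    using exp_ge_add_one_self assms by (intro mult_left_mono) auto
  also have "\<dots> \<le> real q * exp (s / q + s^2)"
  proof -
    have "(exp s - 1) / q \<le> (s + s^2) / q" using exp_quad[OF assms(1)] assms by (simp add: divide_right_mono)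
    also have "\<dots> \<le> s / q + s^2" using assms
      by (simp add: add_divide_distrib divide_le_eq mult_le_cancel_left1 zero_le_power2 )
    finally show ?thesis using assms by simp
  qed
  finally have h: "exp s + real q - 1 \<le> real q * exp (s / q + s^2)" .
  have "0 \<le> exp s + real q - 1" using assms by (smt (verit) exp_gt_zero of_nat_0_less_iff of_nat_1 of_nat_less_iff  less_one)
  hence "(exp s + real q - 1) ^ n \<le> (real q * exp (s / q + s^2)) ^ n" using h by (intro power_mono)
  also have "\<dots> = real q ^ n * exp (real n * (s / q + s^2))"
    by (simp add: power_mult_distrib exp_of_nat_mult)
  finally show ?thesis by (simp add: algebra_simps)
qed

lemma markov:
  fixes f :: "'a \<Rightarrow> real"
  assumes "finite M" "S \<subseteq> M" "\<forall>c\<in>S. exp t \<le> f c" "\<forall>c\<in>M. 0 \<le> f c"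
  shows "real (card S) * exp t \<le> sum f M"
proof -
  have "real (card S) * exp t = (\<Sum>c\<in>S. exp t)" by simp
  also have "\<dots> \<le> sum f S" using assms(3) by (intro sum_mono) auto
  also have "\<dots> \<le> sum f M" using assms by (intro sum_mono2) auto
  finally show ?thesis .
qed

lemma one_side:
  assumes "finite A" "\<forall>p\<in>A. g p < q" "q > 0" "\<bar>s\<bar> \<le> 1/2"
    and "S \<subseteq> PiE A (\<lambda>_. {..<q})"
    and "\<forall>c\<in>S. t \<le> s * real (card {p\<in>A. c p = g p})"
  shows "real (card S) \<le> real q ^ card A * exp (real (card A) * s / q + real (card A) * s^2 - t)"
proof -
  let ?M = "PiE A (\<lambda>_. {..<q})"
  have fin: "finite ?M" using assms(1) by (simp add: finite_PiE)
  have "real (card S) * exp t \<le> (\<Sum>c\<in>?M. exp (s * real (card {p\<in>A. c p = g p})))"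
    using assms(5,6) fin by (intro markov) auto
  also have "\<dots> = (exp s + real q - 1) ^ card A" using mgf assms by blast
  also have "\<dots> \<le> real q ^ card A * exp (real (card A) * s / q + real (card A) * s^2)"
    using mgf_bound assms by blast
  finally have "real (card S) * exp t \<le> real q ^ card A * exp (real (card A) * s / q + real (card A) * s^2)" .
  hence "real (card S) \<le> real q ^ card A * exp (real (card A) * s / q + real (card A) * s^2) / exp t"
    by (simp add: le_divide_eq)
  thus ?thesis by (simp add: exp_diff)
qed

lemma tail:
  assumes "finite A" "card A = n" "n > 0" "\<forall>p\<in>A. g p < q" "q > 0" "lm \<ge> 0"
  shows "real (card {c \<in> PiE A (\<lambda>_. {..<q}).
            \<bar>real (card {p\<in>A. c p = g p}) - real n / q\<bar> > lm})
         \<le> 2 * real q ^ n * exp (- (lm^2) / (4 * n))"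
proof (cases "lm > n")
  case True
  have emp: "{c \<in> PiE A (\<lambda>_. {..<q}). \<bar>real (card {p\<in>A. c p = g p}) - real n / q\<bar> > lm} = {}"
  proof -
    have bnd: "\<bar>real (card {p\<in>A. c p = g p}) - real n / q\<bar> \<le> n" for c
    proof -
      have "card {p\<in>A. c p = g p} \<le> n" using assms(1,2) card_mono[of A "{p\<in>A. c p = g p}"] by auto
      moreover have "real n / q \<le> n" using assms(5) by (simp add: divide_le_eq mult_le_cancel_left1)
      moreover have "real n / q \<ge> 0" by simp
      ultimately show ?thesis by linarith
    qed
    have "\<not> \<bar>real (card {p\<in>A. c p = g p}) - real n / q\<bar> > lm" for c using bnd[of c] True by linarith
    thus ?thesis by simp
  qed
  show ?thesis unfolding emp by simp
next
  case False
  define s where "s = lm / (2 * n)"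
  have s0: "s \<ge> 0" using assms by (simp add: s_def)
  have s1: "s \<le> 1/2" using False assms by (simp add: s_def divide_le_eq)
  let ?m = "\<lambda>c. real (card {p\<in>A. c p = g p})"
  let ?M = "PiE A (\<lambda>_. {..<q})"
  define Up where "Up = {c\<in>?M. ?m c > n/q + lm}"
  define Lo where "Lo = {c\<in>?M. ?m c < n/q - lm}"
  have key: "real n * s^2 - s * lm = - (lm^2) / (4 * n)" proof -
    have "real n > 0" using assms by simp
    thus ?thesis unfolding s_def power2_eq_square by (simp add: field_simps)
  qed
  have hu: "\<forall>c\<in>Up. s * (n/q + lm) \<le> s * ?m c" unfolding Up_def using s0
    by (auto intro!: mult_left_mono)
  have "real (card Up) \<le> real q ^ n * exp (real n * s / q + real n * s^2 - s * (n/q + lm))"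
  proof -
    have "Up \<subseteq> ?M" unfolding Up_def by blast
    moreover have "\<bar>s\<bar> \<le> 1/2" using s0 s1 by simp
    ultimately show ?thesis using one_side[OF assms(1,4,5) _ _ hu] assms(2) by blast
  qed
  also have "real n * s / q + real n * s^2 - s * (n/q + lm) = real n * s^2 - s * lm" by (simp add: algebra_simps)
  finally have up: "real (card Up) \<le> real q ^ n * exp (- (lm^2) / (4 * n))" using key by simp
  have hl: "\<forall>c\<in>Lo. (-s) * (n/q - lm) \<le> (-s) * ?m c" unfolding Lo_def
  proof (intro ballI)
    fix c assume "c \<in> {c\<in>?M. ?m c < n/q - lm}"
    hence "s * ?m c \<le> s * (n/q - lm)" using s0 by (intro mult_left_mono) auto
    thus "(-s) * (n/q - lm) \<le> (-s) * ?m c" by simp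
  qed
  have "real (card Lo) \<le> real q ^ n * exp (real n * (-s) / q + real n * (-s)^2 - (-s) * (n/q - lm))"
  proof -
    have "Lo \<subseteq> ?M" unfolding Lo_def by blast
    moreover have "\<bar>-s\<bar> \<le> 1/2" using s0 s1 by simp
    ultimately show ?thesis using one_side[OF assms(1,4,5) _ _ hl] assms(2) by blast
  qed
  also have "real n * (-s) / q + real n * (-s)^2 - (-s) * (n/q - lm) = real n * s^2 - s * lm" by (simp add: algebra_simps)
  finally have lo: "real (card Lo) \<le> real q ^ n * exp (- (lm^2) / (4 * n))" using key by simp
  have sub: "{c \<in> ?M. \<bar>?m c - real n / q\<bar> > lm} \<subseteq> Up \<union> Lo" unfolding Up_def Lo_def by (auto simp: abs_less_iff)
  have fin: "finite (Up \<union> Lo)" unfolding Up_def Lo_def using assms(1) by (simp add: finite_PiE)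
  have "card {c \<in> ?M. \<bar>?m c - real n / q\<bar> > lm} \<le> card (Up \<union> Lo)" using card_mono[OF fin sub] .
  also have "\<dots> \<le> card Up + card Lo" by (rule card_Un_le)
  finally have "real (card {c \<in> ?M. \<bar>?m c - real n / q\<bar> > lm}) \<le> real (card Up) + real (card Lo)" by linarith
  thus ?thesis using up lo by simp
qed


theorem lemma7:
  fixes q :: nat
  assumes "q > 0"
  shows "\<exists>C::real. \<forall>l::nat. l > q \<and> q dvd l \<longrightarrow>
           (\<exists>c. kll_instance q l c \<and>
              (\<forall>xL xR. kll_labeling q l xL \<and> kll_labeling q l xR \<longrightarrow>
                 \<bar>real (kll_satisfied q l c xL xR) - real l ^ 2 / real q\<bar>
                   \<le> C * real l powr (3/2)))"
proof -
  define C :: real where "C = 2 * sqrt (2 * ln q + 1)"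
  show ?thesis
  proof (intro exI[of _ C] allI impI)
  fix l :: nat assume hl: "q < l \<and> q dvd l"
  have l1: "l \<ge> 1" using hl by simp
  define L where "L = {..<l}"
  define A where "A = L \<times> L"
  define n where "n = l^2"
  have finA: "finite A" unfolding A_def L_def by simp
  have cardA: "card A = n" unfolding A_def L_def n_def by (simp add: power2_eq_square)
  have n0: "n > 0" using l1 unfolding n_def by simp
  define M where "M = PiE A (\<lambda>_. {..<q})"
  have finM: "finite M" unfolding M_def using finA by (simp add: finite_PiE)
  have cardM: "card M = q ^ n" unfolding M_def using finA cardA by (simp add: card_PiE)
  define LS where "LS = PiE L (\<lambda>_. {..<q}) \<times> PiE L (\<lambda>_. {..<q})"
  have finLS: "finite LS" unfolding LS_def L_def by (simp add: finite_PiE)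
  have cardLS: "card LS = q ^ l * q ^ l" unfolding LS_def L_def by (simp add: card_PiE card_cartesian_product)
  define g where "g = (\<lambda>(a::nat\<Rightarrow>nat, b::nat\<Rightarrow>nat) (p::nat\<times>nat). nat ((int (a (fst p)) - int (b (snd p))) mod int q))"
  have gq: "\<forall>p\<in>A. g ab p < q" for ab
  proof
    fix p
    have "(int (fst ab (fst p)) - int (snd ab (snd p))) mod int q < int q" using assms by simp
    moreover have "(int (fst ab (fst p)) - int (snd ab (snd p))) mod int q \<ge> 0" using assms by simp
    ultimately show "g ab p < q" unfolding g_def by (cases ab) (simp add: nat_less_iff)
  qed
  define lm where "lm = C * real l powr (3/2)"
  have lm0: "lm \<ge> 0" unfolding lm_def C_def using assms
    by (intro mult_nonneg_nonneg) (auto intro!: add_nonneg_nonneg)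
  define bad where "bad = (\<lambda>ab. {c \<in> M. \<bar>real (card {p\<in>A. c p = g ab p}) - real n / q\<bar> > lm})"
  define E where "E = exp (- (lm^2) / (4 * real n))"
  have badc: "real (card (bad ab)) \<le> 2 * real q ^ n * E" for ab
    unfolding bad_def M_def E_def using tail[OF finA cardA n0 gq assms lm0] by simp
  have "card (\<Union>ab\<in>LS. bad ab) \<le> (\<Sum>ab\<in>LS. card (bad ab))" by (rule card_UN_le[OF finLS])
  hence "real (card (\<Union>ab\<in>LS. bad ab)) \<le> (\<Sum>ab\<in>LS. real (card (bad ab)))"
    by (metis of_nat_le_iff of_nat_sum)
  also have "\<dots> \<le> (\<Sum>ab\<in>LS. 2 * real q ^ n * E)" by (intro sum_mono badc)
  also have "\<dots> = real q ^ l * real q ^ l * (2 * real q ^ n * E)" using cardLS by simp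
  also have "\<dots> < real q ^ n"
  proof -
    have lq: "real l * ln q = ln (real q ^ l)" using assms by (simp add: ln_realpow)
    have lm2: "lm^2 = C^2 * real l ^ 3"
    proof -
      have "(real l powr (3/2))^2 = real l powr (3/2) * real l powr (3/2)" by (rule power2_eq_square)
      also have "\<dots> = real l powr (3/2 + 3/2)" by (rule powr_add[symmetric])
      also have "\<dots> = real l powr (real 3)" by simp
      also have "\<dots> = real l ^ 3" using l1 by (subst powr_realpow) auto
      finally show ?thesis unfolding lm_def by (simp add: power_mult_distrib)
    qed
    have C2: "C^2 = 4 * (2 * ln q + 1)" unfolding C_def using assms
      by (simp add: power_mult_distrib)
    have "lm^2 / (4 * n) = C^2 * real l / 4"
      unfolding n_def lm2 using l1 by (simp add: field_simps power2_eq_square power3_eq_cube)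
    hence "lm^2 / (4 * n) = (2 * ln q + 1) * real l" unfolding C2 by (simp add: field_simps)
    hence "E = exp (- (2 * (real l * ln q)) - real l)" unfolding E_def by (simp add: algebra_simps)
    also have "\<dots> = exp (- real l) / (real q ^ l * real q ^ l)"
    proof -
      have e2: "exp (2 * ln (real q ^ l)) = real q ^ l * real q ^ l"
      proof -
        have "exp (2 * ln (real q ^ l)) = exp (ln (real q ^ l) + ln (real q ^ l))" by simp
        also have "\<dots> = real q ^ l * real q ^ l" unfolding exp_add using assms by simp
        finally show ?thesis .
      qed
      show ?thesis unfolding lq using assms e2 by (simp add: exp_diff exp_minus field_simps)
    qed
    finally have Eeq: "E = exp (- real l) / (real q ^ l * real q ^ l)" .
    have qpos: "real q ^ l * real q ^ l > 0" using assms by simp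
    have "real q ^ l * real q ^ l * (2 * real q ^ n * E) = 2 * real q ^ n * exp (- real l)"
      using qpos assms unfolding Eeq by (simp add: field_simps)
    also have "\<dots> < real q ^ n"
    proof -
      have "1 + real l \<le> exp (real l)" by simp
      moreover have "real l \<ge> 2" using hl assms by linarith
      ultimately have "exp (real l) > 2" by linarith
      have "exp (- real l) = 1 / exp (real l)" by (simp add: exp_minus inverse_eq_divide)
      also have "\<dots> < 1 / 2" using \<open>exp (real l) > 2\<close> by (intro divide_strict_left_mono) auto
      finally have "exp (- real l) < 1/2" .
      hence "2 * exp (- real l) < 1" by linarith
      moreover have "real q ^ n > 0" using assms by simp
      ultimately have "real q ^ n * (2 * exp (- real l)) < real q ^ n * 1"
        by (intro mult_strict_left_mono)
      thus ?thesis by (simp add: mult.assoc mult.left_commute)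
    qed
    finally show ?thesis .
  qed
  finally have lt: "card (\<Union>ab\<in>LS. bad ab) < card M" using cardM by simp
  have finB: "finite (\<Union>ab\<in>LS. bad ab)"
    by (rule finite_subset[OF _ finM]) (auto simp: bad_def)
  have "\<not> M \<subseteq> (\<Union>ab\<in>LS. bad ab)"
  proof
    assume "M \<subseteq> (\<Union>ab\<in>LS. bad ab)"
    from card_mono[OF finB this] lt show False by simp
  qed
  then obtain c where cM: "c \<in> M" and cnb: "c \<notin> (\<Union>ab\<in>LS. bad ab)" by blast
  show "\<exists>c. kll_instance q l c \<and>
              (\<forall>xL xR. kll_labeling q l xL \<and> kll_labeling q l xR \<longrightarrow>
                 \<bar>real (kll_satisfied q l c xL xR) - real l ^ 2 / real q\<bar>
                   \<le> C * real l powr (3/2))"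
  proof (intro exI conjI allI impI)
    have cq: "\<forall>i<l. \<forall>j<l. c (i, j) < q" using cM unfolding M_def A_def L_def by auto
    thus "kll_instance q l (\<lambda>i j. c (i, j))" unfolding kll_instance_def by simp
    fix xL xR assume lab: "kll_labeling q l xL \<and> kll_labeling q l xR"
    define ab where "ab = (restrict xL L, restrict xR L)"
    have abLS: "ab \<in> LS" using lab unfolding ab_def LS_def L_def kll_labeling_def by auto
    hence "c \<notin> bad ab" using cnb by blast
    hence le: "\<bar>real (card {p\<in>A. c p = g ab p}) - real n / q\<bar> \<le> lm" using cM unfolding bad_def by auto
    have "{(i, j). i < l \<and> j < l \<and> [int (xL i) - int (xR j) = int (c (i, j))] (mod int q)}
          = {p\<in>A. c p = g ab p}"
    proof (intro set_eqI iffI)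
      fix p assume "p \<in> {(i, j). i < l \<and> j < l \<and> [int (xL i) - int (xR j) = int (c (i, j))] (mod int q)}"
      then obtain i j where p: "p = (i,j)" "i < l" "j < l" "[int (xL i) - int (xR j) = int (c (i, j))] (mod int q)" by blast
      have "int (c (i,j)) mod int q = int (c (i,j))" using cq p(2,3) by simp
      hence "(int (xL i) - int (xR j)) mod int q = int (c (i,j))" using p(4) unfolding cong_def by simp
      thus "p \<in> {p\<in>A. c p = g ab p}" using p unfolding g_def ab_def A_def L_def by auto
    next
      fix p assume "p \<in> {p\<in>A. c p = g ab p}"
      then obtain i j where p: "p = (i,j)" "i < l" "j < l" "c (i,j) = nat ((int (xL i) - int (xR j)) mod int q)"
        unfolding g_def ab_def A_def L_def by auto
      hence "int (c (i,j)) = (int (xL i) - int (xR j)) mod int q" using assms by simp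
      hence "[int (xL i) - int (xR j) = int (c (i, j))] (mod int q)" unfolding cong_def
        using cq p(2,3) by simp
      thus "p \<in> {(i, j). i < l \<and> j < l \<and> [int (xL i) - int (xR j) = int (c (i, j))] (mod int q)}"
        using p by simp
    qed
    hence sat: "kll_satisfied q l (\<lambda>i j. c (i, j)) xL xR = card {p\<in>A. c p = g ab p}"
      unfolding kll_satisfied_def by simp
    have rn: "real l ^ 2 = real n" unfolding n_def by simp
    have fin2: "\<bar>real (card {p\<in>A. c p = g ab p}) - real l ^ 2 / real q\<bar> \<le> lm" using le by (simp only: rn)
    show "\<bar>real (kll_satisfied q l (\<lambda>i j. c (i, j)) xL xR) - real l ^ 2 / real q\<bar> \<le> C * real l powr (3/2)"
      using fin2 unfolding sat lm_def .
  qed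
qed
qed

end
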